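(* Let $U$ and the LMC chain be as in the context and $V(x)=|x|^4+1$, $x\in\mathbb{R}^d$. For every $\eta\in(0,\alpha/(2\beta^2))$ there is a positive constant $C$ depending on $\alpha,\beta,\eta$ (not on $d$) such that $\pi_\eta(V)=\int V\,\mathrm{d}\pi_\eta\le Cd^2$.
   Context: $U:\mathbb{R}^d\to\mathbb{R}$ is five times continuously differentiable, $\nabla U(0)=0$, $\frac{\alpha}{2}|x-y|^2\le U(y)-U(x)-\langle\nabla U(x),y-x\rangle\le\frac{\beta}{2}|x-y|^2$ for all $x,y$ with $0<\alpha\le\beta$, and $\sup_x\|\nabla^kU(x)\|_{\mathrm{op}}\le M$ for $k=3,4,5$. LMC chain: $X_{k+1}=X_k-\eta\nabla U(X_k)+\sqrt{2\eta}\xi_{k+1}$ with $(\xi_k)$ i.i.d. $N(0,I_d)$ independent of $X_0$; $\pi_\eta$ denotes its stationary distribution. *)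

theory Defs
  imports "HOL-Probability.Probability"
begin

text \<open>Vectors of R^d are represented as extensional functions on the index set {..<d},
  i.e. elements of PiE {..<d} (\<lambda>_. UNIV); this lets the dimension d vary inside a formula.\<close>

definition Rd :: "nat \<Rightarrow> (nat \<Rightarrow> real) set" where
  "Rd d = PiE {..<d} (\<lambda>_. UNIV)"

definition vzero :: "nat \<Rightarrow> (nat \<Rightarrow> real)" where
  "vzero d = restrict (\<lambda>_. 0) {..<d}"

definition vdiff :: "nat \<Rightarrow> (nat \<Rightarrow> real) \<Rightarrow> (nat \<Rightarrow> real) \<Rightarrow> (nat \<Rightarrow> real)" where
  "vdiff d x y = restrict (\<lambda>i. x i - y i) {..<d}"

definition vinner :: "nat \<Rightarrow> (nat \<Rightarrow> real) \<Rightarrow> (nat \<Rightarrow> real) \<Rightarrow> real" where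
  "vinner d x y = (\<Sum>i<d. x i * y i)"

definition vnorm :: "nat \<Rightarrow> (nat \<Rightarrow> real) \<Rightarrow> real" where
  "vnorm d x = sqrt (vinner d x x)"

definition pderiv_dir :: "nat \<Rightarrow> ((nat \<Rightarrow> real) \<Rightarrow> real) \<Rightarrow> nat \<Rightarrow> (nat \<Rightarrow> real) \<Rightarrow> real" where
  "pderiv_dir d f i x = deriv (\<lambda>t. f (x(i := x i + t))) 0"

fun pdk :: "nat \<Rightarrow> ((nat \<Rightarrow> real) \<Rightarrow> real) \<Rightarrow> nat list \<Rightarrow> (nat \<Rightarrow> real) \<Rightarrow> real" where
  "pdk d f [] = f"
| "pdk d f (i # is) = pderiv_dir d (pdk d f is) i"

text \<open>Five times continuously differentiable on R^d: all partial derivatives of order \<le> 5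
  exist and are continuous (R^d carries the subspace topology of the product topology,
  which is the Euclidean topology).\<close>
definition C5_on_Rd :: "nat \<Rightarrow> ((nat \<Rightarrow> real) \<Rightarrow> real) \<Rightarrow> bool" where
  "C5_on_Rd d f \<longleftrightarrow>
     (\<forall>is. set is \<subseteq> {..<d} \<and> length is < 5 \<longrightarrow>
        (\<forall>i<d. \<forall>x\<in>Rd d. (\<lambda>t. pdk d f is (x(i := x i + t))) differentiable (at 0))) \<and>
     (\<forall>is. set is \<subseteq> {..<d} \<and> length is \<le> 5 \<longrightarrow> continuous_on (Rd d) (pdk d f is))"

definition grad :: "nat \<Rightarrow> ((nat \<Rightarrow> real) \<Rightarrow> real) \<Rightarrow> (nat \<Rightarrow> real) \<Rightarrow> (nat \<Rightarrow> real)" where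
  "grad d f x = restrict (\<lambda>i. pdk d f [i] x) {..<d}"

text \<open>Operator norm of the k-th derivative tensor at x:
  sup of |nabla^k f(x)[v_1,...,v_k]| over |v_j| \<le> 1.\<close>
definition opnorm_Dk :: "nat \<Rightarrow> nat \<Rightarrow> ((nat \<Rightarrow> real) \<Rightarrow> real) \<Rightarrow> (nat \<Rightarrow> real) \<Rightarrow> real" where
  "opnorm_Dk d k f x = (SUP vs \<in> {vs. \<forall>j<k. vs j \<in> Rd d \<and> vnorm d (vs j) \<le> 1}.
      \<bar>\<Sum>is \<in> {is. set is \<subseteq> {..<d} \<and> length is = k}. pdk d f is x * (\<Prod>j<k. vs j (is ! j))\<bar>)"

definition lmc_potential :: "nat \<Rightarrow> real \<Rightarrow> real \<Rightarrow> real \<Rightarrow> ((nat \<Rightarrow> real) \<Rightarrow> real) \<Rightarrow> bool" where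
  "lmc_potential d \<alpha> \<beta> M U \<longleftrightarrow>
     C5_on_Rd d U \<and>
     grad d U (vzero d) = vzero d \<and>
     (\<forall>x\<in>Rd d. \<forall>y\<in>Rd d.
        \<alpha> / 2 * (vnorm d (vdiff d x y))\<^sup>2 \<le> U y - U x - vinner d (grad d U x) (vdiff d y x) \<and>
        U y - U x - vinner d (grad d U x) (vdiff d y x) \<le> \<beta> / 2 * (vnorm d (vdiff d x y))\<^sup>2) \<and>
     (\<forall>k\<in>{3,4,5}. \<forall>x\<in>Rd d. opnorm_Dk d k U x \<le> M)"

definition RdM :: "nat \<Rightarrow> (nat \<Rightarrow> real) measure" where
  "RdM d = PiM {..<d} (\<lambda>_. lborel)"

definition gaussM :: "nat \<Rightarrow> (nat \<Rightarrow> real) measure" where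
  "gaussM d = PiM {..<d} (\<lambda>_. density lborel (\<lambda>x. ennreal (std_normal_density x)))"

definition lmc_step :: "nat \<Rightarrow> real \<Rightarrow> ((nat \<Rightarrow> real) \<Rightarrow> real) \<Rightarrow> (nat \<Rightarrow> real) \<Rightarrow> (nat \<Rightarrow> real) \<Rightarrow> (nat \<Rightarrow> real)" where
  "lmc_step d \<eta> U x \<xi> = restrict (\<lambda>i. x i - \<eta> * grad d U x i + sqrt (2 * \<eta>) * \<xi> i) {..<d}"

text \<open>pi is a stationary distribution of the LMC chain: if X_0 ~ pi independent of xi_1 ~ N(0,I_d),
  then X_1 ~ pi.\<close>
definition lmc_stationary :: "nat \<Rightarrow> real \<Rightarrow> ((nat \<Rightarrow> real) \<Rightarrow> real) \<Rightarrow> (nat \<Rightarrow> real) measure \<Rightarrow> bool" where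
  "lmc_stationary d \<eta> U \<pi> \<longleftrightarrow>
     prob_space \<pi> \<and> sets \<pi> = sets (RdM d) \<and>
     distr (\<pi> \<Otimes>\<^sub>M gaussM d) (RdM d) (\<lambda>(x, \<xi>). lmc_step d \<eta> U x \<xi>) = \<pi>"

end

theory Submission
  imports Defs
begin


lemma vinner_vdiff_left: "vinner d (vdiff d x y) w = vinner d x w - vinner d y w"
  by (simp add: vinner_def vdiff_def sum_subtractf left_diff_distrib)
lemma vinner_vdiff_right: "vinner d w (vdiff d x y) = vinner d w x - vinner d w y"
  by (simp add: vinner_def vdiff_def sum_subtractf right_diff_distrib)
lemma vinner_zero_left: "vinner d (vzero d) w = 0"
  by (simp add: vinner_def vzero_def)
lemma vinner_zero_right: "vinner d w (vzero d) = 0"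
  by (simp add: vinner_def vzero_def)
lemma vinner_commute: "vinner d x y = vinner d y x"
  by (simp add: vinner_def mult.commute)
lemma vinner_nonneg: "0 \<le> vinner d x x"
  by (simp add: vinner_def sum_nonneg)
lemma vnorm_sq: "(vnorm d v)\<^sup>2 = vinner d v v"
  by (simp add: vnorm_def vinner_nonneg)
lemma vinner_scale_left: "vinner d (restrict (\<lambda>i. c * v i) {..<d}) w = c * vinner d v w"
  by (simp add: vinner_def sum_distrib_left mult.assoc)
lemma restrict_Rd: "restrict f {..<d} \<in> Rd d"
  by (simp add: Rd_def)
lemma vdiff_Rd: "vdiff d x y \<in> Rd d" by (simp add: vdiff_def Rd_def)
lemma vzero_Rd: "vzero d \<in> Rd d" by (simp add: vzero_def Rd_def)

lemma grad_bounds: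
  assumes P: "lmc_potential d \<alpha> \<beta> M U" and x: "x \<in> Rd d" and a: "0 < \<alpha>" "\<alpha> \<le> \<beta>"
  shows "\<alpha> * vinner d x x \<le> vinner d (grad d U x) x"
    and "vinner d (grad d U x) (grad d U x) \<le> \<beta>\<^sup>2 * vinner d x x"
proof -
  have g0: "grad d U (vzero d) = vzero d" and
    H: "\<And>x y. x \<in> Rd d \<Longrightarrow> y \<in> Rd d \<Longrightarrow>
        \<alpha> / 2 * vinner d (vdiff d x y) (vdiff d x y) \<le> U y - U x - vinner d (grad d U x) (vdiff d y x) \<and>
        U y - U x - vinner d (grad d U x) (vdiff d y x) \<le> \<beta> / 2 * vinner d (vdiff d x y) (vdiff d x y)"
    using P unfolding lmc_potential_def vnorm_sq by auto
  let ?g = "grad d U x"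
  let ?z = "vdiff d x (restrict (\<lambda>i. (1/\<beta>) * ?g i) {..<d})"
  have h1: "\<alpha> / 2 * vinner d x x \<le> U (vzero d) - U x + vinner d ?g x"
    using H[OF x vzero_Rd] by (simp add: vinner_vdiff_left vinner_vdiff_right vinner_zero_left vinner_zero_right)
  have h2: "\<alpha> / 2 * vinner d x x \<le> U x - U (vzero d)" and h2': "U x - U (vzero d) \<le> \<beta> / 2 * vinner d x x"
    using H[OF vzero_Rd x] g0 by (simp_all add: vinner_vdiff_left vinner_vdiff_right vinner_zero_left vinner_zero_right)
  show "\<alpha> * vinner d x x \<le> vinner d (grad d U x) x" using h1 h2 by linarith
  have h3: "0 \<le> U ?z - U (vzero d)"
  proof -
    have "\<alpha> / 2 * vinner d (vdiff d (vzero d) ?z) (vdiff d (vzero d) ?z) \<le> U ?z - U (vzero d)"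
      using H[OF vzero_Rd vdiff_Rd, of x "restrict (\<lambda>i. (1/\<beta>) * ?g i) {..<d}"] g0
      by (simp add: vinner_zero_left)
    moreover have "0 \<le> \<alpha> / 2 * vinner d (vdiff d (vzero d) ?z) (vdiff d (vzero d) ?z)"
      using a vinner_nonneg by simp
    ultimately show ?thesis by linarith
  qed
  let ?h = "restrict (\<lambda>i. (1/\<beta>) * ?g i) {..<d}"
  have e1: "vinner d (vdiff d x ?z) (vdiff d x ?z) = vinner d ?g ?g / \<beta>^2"
    by (simp add: vinner_def vdiff_def sum_divide_distrib power2_eq_square)
  have e2: "vinner d ?g (vdiff d ?z x) = - (vinner d ?g ?g / \<beta>)"
    by (simp add: vinner_def vdiff_def sum_divide_distrib sum_negf)
  have h4: "U ?z - U x + vinner d ?g ?g / \<beta> \<le> \<beta> / 2 * (vinner d ?g ?g / \<beta>^2)"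
    using H[OF x vdiff_Rd, of x ?h] unfolding e1 e2 by simp
  have bp: "\<beta> > 0" using a by simp
  have "vinner d ?g ?g / \<beta> \<le> \<beta> / 2 * (vinner d ?g ?g / \<beta>^2) + \<beta> / 2 * vinner d x x"
    using h2' h3 h4 by linarith
  also have "\<beta> / 2 * (vinner d ?g ?g / \<beta>^2) = vinner d ?g ?g / \<beta> / 2"
    using bp by (simp add: power2_eq_square field_simps)
  finally have "vinner d ?g ?g / \<beta> \<le> \<beta> * vinner d x x" by simp
  then show "vinner d ?g ?g \<le> \<beta>\<^sup>2 * vinner d x x"
    using bp by (simp add: field_simps power2_eq_square)
qed


lemma sq_split:
  fixes u v c :: real assumes "0 < c"
  shows "(u + v)\<^sup>2 \<le> (1 + c) * u\<^sup>2 + (1 + 1/c) * v\<^sup>2"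
proof -
  have "0 \<le> (c * u - v)\<^sup>2 / c" using assms by simp
  also have "(c * u - v)\<^sup>2 / c = c * u\<^sup>2 - 2 * u * v + v\<^sup>2 / c"
    using assms by (simp add: power2_eq_square field_simps)
  finally show ?thesis by (simp add: power2_eq_square algebra_simps add_divide_distrib)
qed

lemma consts_ok:
  fixes \<alpha> \<beta> \<eta> :: real
  assumes "0 < \<alpha>" "\<alpha> \<le> \<beta>" "0 < \<eta>" "\<eta> < \<alpha> / (2 * \<beta>\<^sup>2)"
  defines "Q \<equiv> 1 - 2 * \<eta> * \<alpha> + \<eta>\<^sup>2 * \<beta>\<^sup>2"
  defines "c \<equiv> (1 - Q) / 7"
  shows "0 \<le> Q" "Q < 1" "0 < c" "(1 + c)^3 * Q\<^sup>2 < 1"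
proof -
  have bp: "0 < \<beta>" using assms by simp
  have "Q = (1 - \<eta> * \<beta>)\<^sup>2 + 2 * \<eta> * (\<beta> - \<alpha>)" unfolding Q_def by (simp add: power2_eq_square algebra_simps)
  moreover have "0 \<le> 2 * \<eta> * (\<beta> - \<alpha>)" using assms by simp
  ultimately show Q0: "0 \<le> Q" by simp
  have "\<eta> * (2 * \<beta>\<^sup>2) < \<alpha>" using assms(4) bp by (simp add: field_simps)
  then have "2 * (\<eta> * \<beta>\<^sup>2) < \<alpha>" by (simp add: algebra_simps)
  moreover have "0 \<le> \<eta> * \<beta>\<^sup>2" using assms by simp
  ultimately have "\<eta> * \<beta>\<^sup>2 < 2 * \<alpha>" by linarith
  then have "\<eta> * (\<eta> * \<beta>\<^sup>2) < \<eta> * (2 * \<alpha>)" using assms by simp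
  then show Q1: "Q < 1" unfolding Q_def by (simp add: power2_eq_square algebra_simps)
  then show c0: "0 < c" unfolding c_def by simp
  have c1: "c \<le> 1" unfolding c_def using Q0 by simp
  have "(1 + c)^3 \<le> 1 + 7 * c"
  proof -
    have "(1 + c)^3 = 1 + 3*c + 3*c\<^sup>2 + c^3" by (simp add: power3_eq_cube power2_eq_square algebra_simps)
    moreover have "c\<^sup>2 \<le> c" using c0 c1 by (simp add: power2_eq_square mult_le_cancel_left1)
    moreover have "c^3 \<le> c" using c0 c1 by (simp add: power_le_one power3_eq_cube mult_le_one)
    ultimately show ?thesis by linarith
  qed
  moreover have "Q\<^sup>2 \<le> Q" using Q0 Q1 by (simp add: power2_eq_square mult_left_le)
  ultimately have "(1 + c)^3 * Q\<^sup>2 \<le> (1 + 7 * c) * Q"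
    using Q0 c0 by (intro mult_mono) auto
  also have "(1 + 7 * c) * Q = (2 - Q) * Q" unfolding c_def by simp
  also have "\<dots> = 1 - (1 - Q)\<^sup>2" by (simp add: power2_eq_square algebra_simps)
  also have "\<dots> < 1" using Q1 by simp
  finally show "(1 + c)^3 * Q\<^sup>2 < 1" .
qed

lemma step_bound:
  fixes \<alpha> \<beta> \<eta> c :: real
  assumes P: "lmc_potential d \<alpha> \<beta> M U" and x: "x \<in> Rd d" and a: "0 < \<alpha>" "\<alpha> \<le> \<beta>" "0 < \<eta>"
    and c: "0 < c"
  defines "Q \<equiv> 1 - 2 * \<eta> * \<alpha> + \<eta>\<^sup>2 * \<beta>\<^sup>2"
  assumes Q0: "0 \<le> Q"
  shows "(vnorm d (lmc_step d \<eta> U x \<xi>))^4 + 1 \<le>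
     ((1 + c)^3 * Q\<^sup>2) * ((vnorm d x)^4 + 1) + ((1 + 1/c)^3 * (2*\<eta>)\<^sup>2 * real d * (\<Sum>i<d. (\<xi> i)^4) + 1)"
proof -
  let ?g = "grad d U x"
  let ?y = "lmc_step d \<eta> U x \<xi>"
  define a2 where "a2 = vinner d x x"
  define b2 where "b2 = vinner d \<xi> \<xi>"
  have a20: "0 \<le> a2" "0 \<le> b2" unfolding a2_def b2_def by (simp_all add: vinner_nonneg)
  have gb1: "\<alpha> * a2 \<le> vinner d ?g x" and gb2: "vinner d ?g ?g \<le> \<beta>\<^sup>2 * a2"
    using grad_bounds[OF P x a(1,2)] unfolding a2_def by auto
  have yy: "vinner d ?y ?y = (\<Sum>i<d. ((x i - \<eta> * ?g i) + sqrt (2*\<eta>) * \<xi> i)\<^sup>2)"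
    by (simp add: vinner_def lmc_step_def power2_eq_square)
  also have "\<dots> \<le> (\<Sum>i<d. (1 + c) * (x i - \<eta> * ?g i)\<^sup>2 + (1 + 1/c) * (sqrt (2*\<eta>) * \<xi> i)\<^sup>2)"
    by (intro sum_mono sq_split c)
  also have "\<dots> = (1 + c) * (\<Sum>i<d. (x i - \<eta> * ?g i)\<^sup>2) + (1 + 1/c) * (2 * \<eta> * b2)"
  proof -
    have sq: "\<And>i. (sqrt (2*\<eta>) * \<xi> i)\<^sup>2 = 2*\<eta>*(\<xi> i)\<^sup>2" using a(3) by (simp add: power_mult_distrib)
    have "(\<Sum>i<d. 2*\<eta>*(\<xi> i)\<^sup>2) = 2 * \<eta> * b2"
      by (simp add: b2_def vinner_def sum_distrib_left power2_eq_square)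
    then show ?thesis by (simp add: sq sum.distrib sum_distrib_left[symmetric])
  qed
  also have "(\<Sum>i<d. (x i - \<eta> * ?g i)\<^sup>2) = a2 - 2 * \<eta> * vinner d ?g x + \<eta>\<^sup>2 * vinner d ?g ?g"
    by (simp add: a2_def vinner_def power2_eq_square algebra_simps sum.distrib sum_subtractf sum_distrib_left)
  also have "\<dots> \<le> Q * a2"
  proof -
    have "- 2 * \<eta> * vinner d ?g x \<le> - 2 * \<eta> * (\<alpha> * a2)" using gb1 a(3) by simp
    moreover have "\<eta>\<^sup>2 * vinner d ?g ?g \<le> \<eta>\<^sup>2 * (\<beta>\<^sup>2 * a2)" using gb2 by (simp add: mult_left_mono)
    ultimately show ?thesis unfolding Q_def by (simp add: algebra_simps)
  qed
  finally have yb: "vinner d ?y ?y \<le> (1 + c) * (Q * a2) + (1 + 1/c) * (2 * \<eta> * b2)"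
    using c by (simp add: mult_left_mono)
  define A where "A = (1 + c) * (Q * a2)"
  define B where "B = (1 + 1/c) * (2 * \<eta> * b2)"
  have AB0: "0 \<le> A" "0 \<le> B" unfolding A_def B_def using c Q0 a20 a(3) by simp_all
  have "(vnorm d ?y)^4 = (vinner d ?y ?y)\<^sup>2"
    by (metis vnorm_sq power_mult numeral_Bit0 numeral_One mult_2 one_add_one) 
  also have "\<dots> \<le> (A + B)\<^sup>2"
    using yb vinner_nonneg[of d ?y] unfolding A_def B_def by (intro power_mono) auto
  also have "\<dots> \<le> (1 + c) * A\<^sup>2 + (1 + 1/c) * B\<^sup>2" by (rule sq_split[OF c])
  also have "(1 + c) * A\<^sup>2 = ((1 + c)^3 * Q\<^sup>2) * (vnorm d x)^4"
  proof -
    have "(vnorm d x)^4 = a2\<^sup>2" unfolding a2_def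
      by (metis vnorm_sq power_mult numeral_Bit0 numeral_One mult_2 one_add_one)
    then show ?thesis unfolding A_def by (simp add: power2_eq_square power3_eq_cube)
  qed
  also have "(1 + 1/c) * B\<^sup>2 = (1 + 1/c)^3 * (2*\<eta>)\<^sup>2 * b2\<^sup>2"
    unfolding B_def by (simp add: power2_eq_square power3_eq_cube)
  finally have main: "(vnorm d ?y)^4 \<le> ((1 + c)^3 * Q\<^sup>2) * (vnorm d x)^4 + (1 + 1/c)^3 * (2*\<eta>)\<^sup>2 * b2\<^sup>2" .
  have "b2\<^sup>2 \<le> real d * (\<Sum>i<d. (\<xi> i)^4)"
  proof -
    have "b2 = (\<Sum>i<d. (\<xi> i)\<^sup>2)" unfolding b2_def vinner_def by (simp add: power2_eq_square)
    then have "b2\<^sup>2 \<le> (\<Sum>i<d. ((\<xi> i)\<^sup>2)\<^sup>2) * card {..<d}"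
      using sum_squared_le_sum_of_squares[of "\<lambda>i. (\<xi> i)\<^sup>2" "{..<d}"] by simp
    then show ?thesis by (simp add: mult.commute flip: power_mult)
  qed
  have K0: "0 \<le> (1 + 1/c)^3 * (2*\<eta>)\<^sup>2" using c by simp
  have rho0: "0 \<le> (1 + c)^3 * Q\<^sup>2" using c by simp
  show ?thesis
    using mult_left_mono[OF \<open>b2\<^sup>2 \<le> _\<close> K0] rho0 main
    by (simp add: algebra_simps)
qed



lemma space_RdM: "space (RdM d) = Rd d"
  by (simp add: RdM_def Rd_def space_PiM)

lemma cont_meas:
  assumes f: "continuous_on (Rd d) f"
  shows "f \<in> borel_measurable (RdM d)"
proof -
  let ?r = "\<lambda>y::nat \<Rightarrow> real. restrict y {..<d}"
  have rc: "continuous_on UNIV ?r"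
  proof (intro continuous_on_coordinatewise_then_product)
    fix i show "continuous_on UNIV (\<lambda>y::nat\<Rightarrow>real. restrict y {..<d} i)"
      by (cases "i < d") (simp_all add: continuous_on_const)
  qed
  have "continuous_on UNIV (f \<circ> ?r)"
    by (rule continuous_on_compose[OF rc]) (rule continuous_on_subset[OF f], auto simp: restrict_Rd)
  then have fb: "(f \<circ> ?r) \<in> borel_measurable borel" by (rule borel_measurable_continuous_onI)
  have e: "(\<lambda>x. x) \<in> measurable (RdM d) (borel :: (nat \<Rightarrow> real) measure)"
  proof (rule measurable_coordinatewise_then_product)
    fix i
    show "(\<lambda>x. x i) \<in> borel_measurable (RdM d)"
    proof (cases "i < d")
      case True then show ?thesis unfolding RdM_def using measurable_component_singleton[of i "{..<d}" "\<lambda>_. lborel"] by simp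
    next
      case False
      then have "(\<lambda>x. undefined) \<in> borel_measurable (RdM d)" by simp
      moreover have "\<And>x. x \<in> space (RdM d) \<Longrightarrow> undefined = x i" using False
        by (auto simp: space_RdM Rd_def PiE_def extensional_def)
      ultimately show ?thesis by (rule measurable_cong[THEN iffD1, rotated])
    qed
  qed
  have "(f \<circ> ?r) \<circ> (\<lambda>x. x) \<in> borel_measurable (RdM d)" by (rule measurable_comp[OF e fb])
  moreover have "\<And>x. x \<in> space (RdM d) \<Longrightarrow> ((f \<circ> ?r) \<circ> (\<lambda>x. x)) x = f x"
    by (auto simp: space_RdM Rd_def PiE_def extensional_restrict)
  ultimately show ?thesis by (rule measurable_cong[THEN iffD1, rotated])
qed



lemma prob_std: "prob_space (density lborel (\<lambda>x. ennreal (std_normal_density x)))"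
  using prob_space_normal_density[of 1 0] by simp

lemma prob_gauss: "prob_space (gaussM d)"
  unfolding gaussM_def by (rule prob_space_PiM) (rule prob_std)

lemma std_4th: "(\<integral>\<^sup>+ x. ennreal (x ^ 4) \<partial>density lborel (\<lambda>x. ennreal (std_normal_density x))) = 3"
proof -
  have "(\<integral>\<^sup>+ x. ennreal (x ^ 4) \<partial>density lborel (\<lambda>x. ennreal (std_normal_density x)))
      = (\<integral>\<^sup>+ x. ennreal (std_normal_density x) * ennreal (x ^ 4) \<partial>lborel)"
    by (subst nn_integral_density) auto
  also have "\<dots> = (\<integral>\<^sup>+ x. ennreal (std_normal_density x * x ^ (2*2)) \<partial>lborel)"
    by (intro nn_integral_cong) (simp add: ennreal_mult normal_density_nonneg)
  also have "\<dots> = ennreal (\<integral> x. std_normal_density x * x ^ (2*2) \<partial>lborel)"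
    by (intro nn_integral_eq_integral integrable_std_normal_moment) (auto simp: normal_density_nonneg)
  also have "(\<integral> x. std_normal_density x * x ^ (2*2) \<partial>lborel) = 3"
    by (subst integral_std_normal_moment_even) (simp add: fact_numeral)
  finally show ?thesis by simp
qed

lemma gauss_4th:
  assumes "i < d"
  shows "(\<integral>\<^sup>+ \<xi>. ennreal ((\<xi> i) ^ 4) \<partial>gaussM d) = 3"
proof -
  have "(\<integral>\<^sup>+ \<xi>. ennreal ((\<xi> i) ^ 4) \<partial>gaussM d)
      = (\<integral>\<^sup>+ x. ennreal (x ^ 4) \<partial>distr (gaussM d) (density lborel (\<lambda>x. ennreal (std_normal_density x))) (\<lambda>\<omega>. \<omega> i))"
    unfolding gaussM_def using assms
    by (subst nn_integral_distr) auto
  also have "distr (gaussM d) (density lborel (\<lambda>x. ennreal (std_normal_density x))) (\<lambda>\<omega>. \<omega> i)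
      = density lborel (\<lambda>x. ennreal (std_normal_density x))"
    unfolding gaussM_def using assms
    by (intro distr_PiM_component prob_std) auto
  finally show ?thesis using std_4th by simp
qed

lemma gauss_sum:
  fixes K :: real assumes "0 \<le> K"
  shows "(\<integral>\<^sup>+ \<xi>. ennreal (K * (\<Sum>i<d. (\<xi> i)^4) + 1) \<partial>gaussM d) = ennreal (K * (3 * real d) + 1)"
proof -
  interpret G: prob_space "gaussM d" by (rule prob_gauss)
  have meas: "\<And>i. i < d \<Longrightarrow> (\<lambda>\<xi>. ennreal ((\<xi> i)^4)) \<in> borel_measurable (gaussM d)"
    unfolding gaussM_def by measurable
  have "(\<integral>\<^sup>+ \<xi>. ennreal (K * (\<Sum>i<d. (\<xi> i)^4) + 1) \<partial>gaussM d)
     = (\<integral>\<^sup>+ \<xi>. ennreal K * (\<Sum>i<d. ennreal ((\<xi> i)^4)) + 1 \<partial>gaussM d)"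
    using assms by (intro nn_integral_cong) (simp add: ennreal_mult[symmetric] sum_nonneg ennreal_plus)
  also have "\<dots> = ennreal K * (\<Sum>i<d. (\<integral>\<^sup>+ \<xi>. ennreal ((\<xi> i)^4) \<partial>gaussM d)) + 1"
  proof -
    have ms: "(\<integral>\<^sup>+ \<xi>. ennreal (\<Sum>i<d. (\<xi> i)^4) \<partial>gaussM d) = (\<Sum>i<d. (\<integral>\<^sup>+ \<xi>. ennreal ((\<xi> i)^4) \<partial>gaussM d))"
    proof -
      have "(\<integral>\<^sup>+ \<xi>. ennreal (\<Sum>i<d. (\<xi> i)^4) \<partial>gaussM d) = (\<integral>\<^sup>+ \<xi>. (\<Sum>i<d. ennreal ((\<xi> i)^4)) \<partial>gaussM d)"
        by (intro nn_integral_cong) simp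
      also have "\<dots> = (\<Sum>i<d. (\<integral>\<^sup>+ \<xi>. ennreal ((\<xi> i)^4) \<partial>gaussM d))"
        using meas by (intro nn_integral_sum) auto
      finally show ?thesis .
    qed
    show ?thesis using meas by (simp add: nn_integral_add nn_integral_cmult G.emeasure_space_1 ms)
  qed
  also have "\<dots> = ennreal K * (\<Sum>i<d. 3) + 1" by (simp add: gauss_4th)
  also have "\<dots> = ennreal (K * (3 * real d) + 1)"
    using assms by (simp add: ennreal_plus ennreal_of_nat_eq_real_of_nat mult.commute ennreal_mult'' ennreal_mult)
  finally show ?thesis .
qed



lemma comp_meas: "i < d \<Longrightarrow> (\<lambda>x. x i) \<in> borel_measurable (RdM d)"
  unfolding RdM_def using measurable_component_singleton[of i "{..<d}" "\<lambda>_. lborel"] by simp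

lemma vnorm_meas: "vnorm d \<in> borel_measurable (RdM d)"
proof -
  have "(\<lambda>x. sqrt (\<Sum>i<d. x i * x i)) \<in> borel_measurable (RdM d)"
  proof -
    have "(\<lambda>x. \<Sum>i<d. x i * x i) \<in> borel_measurable (RdM d)"
      using comp_meas[of _ d] by (intro borel_measurable_sum borel_measurable_times) auto
    then show ?thesis by (rule measurable_compose) simp
  qed
  then show ?thesis unfolding vnorm_def vinner_def by (simp add: fun_eq_iff[symmetric])
qed

lemma step_meas:
  assumes S: "sets \<pi> = sets (RdM d)" and C: "C5_on_Rd d U"
  shows "(\<lambda>(x,\<xi>). lmc_step d \<eta> U x \<xi>) \<in> measurable (\<pi> \<Otimes>\<^sub>M gaussM d) (RdM d)"
proof -
  have pd: "pdk d U [i] \<in> borel_measurable (RdM d)" if "i < d" for i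
  proof -
    from C have H: "\<And>is. set is \<subseteq> {..<d} \<Longrightarrow> length is \<le> 5 \<Longrightarrow> continuous_on (Rd d) (pdk d U is)"
      unfolding C5_on_Rd_def by blast
    show ?thesis using that by (intro cont_meas H) auto
  qed
  have gm: "\<And>i. i < d \<Longrightarrow> (\<lambda>\<xi>. \<xi> i) \<in> borel_measurable (gaussM d)"
    unfolding gaussM_def by measurable
  have comp: "(\<lambda>z. fst z i - \<eta> * pdk d U [i] (fst z) + sqrt (2 * \<eta>) * snd z i)
        \<in> measurable (RdM d \<Otimes>\<^sub>M gaussM d) lborel" if i: "i \<in> {..<d}" for i
  proof -
    have a: "(\<lambda>z. fst z i) \<in> borel_measurable (RdM d \<Otimes>\<^sub>M gaussM d)"
      using comp_meas[of i d] i by (intro measurable_compose[OF measurable_fst]) auto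
    have b: "(\<lambda>z. pdk d U [i] (fst z)) \<in> borel_measurable (RdM d \<Otimes>\<^sub>M gaussM d)"
      using pd[of i] i by (intro measurable_compose[OF measurable_fst]) auto
    have c: "(\<lambda>z. snd z i) \<in> borel_measurable (RdM d \<Otimes>\<^sub>M gaussM d)"
      using gm[of i] i by (intro measurable_compose[OF measurable_snd]) auto
    show ?thesis using a b c by simp
  qed
  have X: "(\<lambda>z. restrict (\<lambda>i. fst z i - \<eta> * pdk d U [i] (fst z) + sqrt (2 * \<eta>) * snd z i) {..<d})
      \<in> measurable (RdM d \<Otimes>\<^sub>M gaussM d) (PiM {..<d} (\<lambda>_. lborel))"
    by (rule measurable_restrict) (rule comp)
  have "(\<lambda>z. restrict (\<lambda>i. fst z i - \<eta> * pdk d U [i] (fst z) + sqrt (2 * \<eta>) * snd z i) {..<d})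
      \<in> measurable (RdM d \<Otimes>\<^sub>M gaussM d) (RdM d)"
    using X by (simp add: RdM_def)
  then have "(\<lambda>z. restrict (\<lambda>i. fst z i - \<eta> * pdk d U [i] (fst z) + sqrt (2 * \<eta>) * snd z i) {..<d})
      \<in> measurable (\<pi> \<Otimes>\<^sub>M gaussM d) (RdM d)"
    by (subst measurable_cong_sets[OF sets_pair_measure_cong[OF S refl] refl])
  moreover have "(\<lambda>(x,\<xi>). lmc_step d \<eta> U x \<xi>) = (\<lambda>z. restrict (\<lambda>i. fst z i - \<eta> * pdk d U [i] (fst z) + sqrt (2 * \<eta>) * snd z i) {..<d})"
    by (auto simp: fun_eq_iff lmc_step_def grad_def)
  ultimately show ?thesis by simp
qed



lemma phi_le: "0 < e \<Longrightarrow> 0 \<le> (t::real) \<Longrightarrow> t / (1 + e * t) \<le> 1 / e"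
proof -
  assume h: "0 < e" "0 \<le> t"
  then have "0 < 1 + e * t" by (auto intro: add_pos_nonneg)
  then show ?thesis using h by (simp add: field_simps)
qed

lemma phi_mono: "0 \<le> e \<Longrightarrow> 0 \<le> (a::real) \<Longrightarrow> a \<le> b \<Longrightarrow> a / (1 + e * a) \<le> b / (1 + e * b)"
proof -
  assume h: "0 \<le> e" "0 \<le> a" "a \<le> b"
  have "a * (1 + e * b) \<le> b * (1 + e * a)" using h by (simp add: algebra_simps)
  moreover have "0 < 1 + e * a" "0 < 1 + e * b" using h by (auto intro: add_pos_nonneg)
  ultimately show ?thesis by (simp add: divide_simps)
qed

lemma phi_lip: "0 \<le> e \<Longrightarrow> 0 \<le> (u::real) \<Longrightarrow> 0 \<le> w \<Longrightarrow> (u + w) / (1 + e * (u + w)) \<le> u / (1 + e * u) + w"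
proof -
  assume h: "0 \<le> e" "0 \<le> u" "0 \<le> w"
  have p1: "0 < 1 + e * u" "0 < 1 + e * (u + w)" using h by (auto intro: add_pos_nonneg)
  have "(u + w) / (1 + e * (u + w)) - u / (1 + e * u) = w / ((1 + e * (u + w)) * (1 + e * u))"
    using p1 by (simp add: field_simps)
  also have "\<dots> \<le> w"
  proof -
    have "1 \<le> (1 + e * (u + w)) * (1 + e * u)" using h by (simp add: algebra_simps)
    then show ?thesis using h by (simp add: divide_le_eq mult_le_cancel_left1 order.trans[OF _ mult_right_mono])
  qed
  finally show ?thesis by simp
qed

lemma phi_diff: "0 \<le> e \<Longrightarrow> 0 \<le> (v::real) \<Longrightarrow> 0 \<le> r \<Longrightarrow>
  v / (1 + e * v) = r * v / (1 + e * (r * v)) + (1 - r) * v / ((1 + e * v) * (1 + e * (r * v)))"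
proof -
  assume h: "0 \<le> e" "0 \<le> v" "0 \<le> r"
  have p: "0 < 1 + e * v" "0 < 1 + e * (r * v)" using h by (auto intro: add_pos_nonneg)
  have "v / (1 + e * v) - r * v / (1 + e * (r * v)) = (v * (1 + e * (r * v)) - r * v * (1 + e * v)) / ((1 + e * v) * (1 + e * (r * v)))"
    using p by (intro diff_frac_eq) auto
  also have "v * (1 + e * (r * v)) - r * v * (1 + e * v) = (1 - r) * v" by (simp add: algebra_simps)
  finally show ?thesis by simp
qed



lemma main_d:
  fixes \<rho> K :: real
  assumes S: "lmc_stationary d \<eta> U \<pi>" and C5: "C5_on_Rd d U"
    and r0: "0 \<le> \<rho>" and r1: "\<rho> < 1" and K0: "0 \<le> K"
    and PB: "\<And>x \<xi>. x \<in> Rd d \<Longrightarrow> (vnorm d (lmc_step d \<eta> U x \<xi>))^4 + 1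
               \<le> \<rho> * ((vnorm d x)^4 + 1) + (K * real d * (\<Sum>i<d. (\<xi> i)^4) + 1)"
  shows "(\<integral>\<^sup>+ x. ennreal ((vnorm d x)^4 + 1) \<partial>\<pi>) \<le> ennreal ((K * real d * (3 * real d) + 1) / (1 - \<rho>))"
proof -
  let ?G = "gaussM d"
  define cst where "cst = K * real d * (3 * real d) + 1"
  have cst0: "0 \<le> cst" unfolding cst_def using K0 by simp
  have P: "prob_space \<pi>" and Ss: "sets \<pi> = sets (RdM d)"
    and D: "distr (\<pi> \<Otimes>\<^sub>M ?G) (RdM d) (\<lambda>(x, \<xi>). lmc_step d \<eta> U x \<xi>) = \<pi>"
    using S unfolding lmc_stationary_def by auto
  interpret pi: prob_space \<pi> by (rule P)
  interpret G: prob_space ?G by (rule prob_gauss)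
  have sp: "space \<pi> = Rd d" using sets_eq_imp_space_eq[OF Ss] space_RdM by simp
  define V where "V x = (vnorm d x)^4 + 1" for x
  have V1: "1 \<le> V x" for x unfolding V_def by simp
  have Vm: "V \<in> borel_measurable (RdM d)"
    unfolding V_def using vnorm_meas by measurable
  have Vm': "V \<in> borel_measurable \<pi>" by (subst measurable_cong_sets[OF Ss refl]) (rule Vm)
  have stm: "(\<lambda>(x,\<xi>). lmc_step d \<eta> U x \<xi>) \<in> measurable (\<pi> \<Otimes>\<^sub>M ?G) (RdM d)"
    by (rule step_meas[OF Ss C5])
  have gauss: "(\<integral>\<^sup>+ \<xi>. ennreal (K * real d * (\<Sum>i<d. (\<xi> i)^4) + 1) \<partial>?G) = ennreal cst"
    unfolding cst_def using gauss_sum[of "K * real d" d] K0 by simp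
  define g where "g n x = (1 - \<rho>) * V x / ((1 + inverse (real (Suc n)) * V x) * (1 + inverse (real (Suc n)) * (\<rho> * V x)))" for n x
  have key: "(\<integral>\<^sup>+ x. ennreal (g n x) \<partial>\<pi>) \<le> ennreal cst" for n
  proof -
    define e where "e = inverse (real (Suc n))"
    have e0: "0 < e" unfolding e_def by simp
    define phi where "phi t = t / (1 + e * t)" for t
    have phim: "(\<lambda>x. ennreal (phi (V x))) \<in> borel_measurable (RdM d)"
      unfolding phi_def using Vm by measurable
    have phim2: "(\<lambda>x. ennreal (phi (\<rho> * V x))) \<in> borel_measurable \<pi>"
      unfolding phi_def using Vm' by measurable
    have gm: "(\<lambda>x. ennreal (g n x)) \<in> borel_measurable \<pi>"
      unfolding g_def using Vm' by measurable
    have "(\<integral>\<^sup>+ x. ennreal (phi (V x)) \<partial>\<pi>) = (\<integral>\<^sup>+ x. ennreal (phi (V x)) \<partial>distr (\<pi> \<Otimes>\<^sub>M ?G) (RdM d) (\<lambda>(x, \<xi>). lmc_step d \<eta> U x \<xi>))"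
      using D by simp
    also have "\<dots> = (\<integral>\<^sup>+ z. ennreal (phi (V ((\<lambda>(x, \<xi>). lmc_step d \<eta> U x \<xi>) z))) \<partial>(\<pi> \<Otimes>\<^sub>M ?G))"
      by (rule nn_integral_distr[OF stm]) (simp add: phim)
    also have "\<dots> = (\<integral>\<^sup>+ x. \<integral>\<^sup>+ \<xi>. ennreal (phi (V (lmc_step d \<eta> U x \<xi>))) \<partial>?G \<partial>\<pi>)"
    proof -
      have "(\<lambda>z. ennreal (phi (V ((\<lambda>(x, \<xi>). lmc_step d \<eta> U x \<xi>) z)))) \<in> borel_measurable (\<pi> \<Otimes>\<^sub>M ?G)"
        using measurable_comp[OF stm phim] by (simp add: comp_def)
      from G.nn_integral_fst[OF this] show ?thesis by simp
    qed
    also have "\<dots> \<le> (\<integral>\<^sup>+ x. ennreal (phi (\<rho> * V x)) + ennreal cst \<partial>\<pi>)"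
    proof (rule nn_integral_mono)
      fix x assume "x \<in> space \<pi>"
      then have x: "x \<in> Rd d" using sp by simp
      have "(\<integral>\<^sup>+ \<xi>. ennreal (phi (V (lmc_step d \<eta> U x \<xi>))) \<partial>?G)
          \<le> (\<integral>\<^sup>+ \<xi>. ennreal (phi (\<rho> * V x)) + ennreal (K * real d * (\<Sum>i<d. (\<xi> i)^4) + 1) \<partial>?G)"
      proof (rule nn_integral_mono)
        fix \<xi>
        have w0: "0 \<le> K * real d * (\<Sum>i<d. (\<xi> i)^4) + 1"
          using K0 by (simp add: sum_nonneg)
        have "phi (V (lmc_step d \<eta> U x \<xi>)) \<le> phi (\<rho> * V x + (K * real d * (\<Sum>i<d. (\<xi> i)^4) + 1))"
          unfolding phi_def using PB[OF x, of \<xi>] e0 V1[of "lmc_step d \<eta> U x \<xi>"]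
          by (intro phi_mono) (auto simp: V_def)
        also have "\<dots> \<le> phi (\<rho> * V x) + (K * real d * (\<Sum>i<d. (\<xi> i)^4) + 1)"
          unfolding phi_def using e0 r0 V1[of x] w0 by (intro phi_lip) auto
        finally have "ennreal (phi (V (lmc_step d \<eta> U x \<xi>))) \<le> ennreal (phi (\<rho> * V x) + (K * real d * (\<Sum>i<d. (\<xi> i)^4) + 1))"
          by (rule ennreal_leI)
        also have "ennreal (phi (\<rho> * V x) + (K * real d * (\<Sum>i<d. (\<xi> i)^4) + 1)) = ennreal (phi (\<rho> * V x)) + ennreal (K * real d * (\<Sum>i<d. (\<xi> i)^4) + 1)"
          using w0 e0 r0 V1[of x] by (intro ennreal_plus) (auto simp: phi_def)
        finally show "ennreal (phi (V (lmc_step d \<eta> U x \<xi>))) \<le> ennreal (phi (\<rho> * V x)) + ennreal (K * real d * (\<Sum>i<d. (\<xi> i)^4) + 1)" .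
      qed
      also have "\<dots> = ennreal (phi (\<rho> * V x)) + ennreal cst"
      proof -
        have "(\<lambda>\<xi>. ennreal (K * real d * (\<Sum>i<d. (\<xi> i)^4) + 1)) \<in> borel_measurable ?G"
          unfolding gaussM_def by measurable
        then show ?thesis by (subst nn_integral_add) (auto simp: gauss G.emeasure_space_1)
      qed
      finally show "(\<integral>\<^sup>+ \<xi>. ennreal (phi (V (lmc_step d \<eta> U x \<xi>))) \<partial>?G) \<le> ennreal (phi (\<rho> * V x)) + ennreal cst" .
    qed
    also have "\<dots> = (\<integral>\<^sup>+ x. ennreal (phi (\<rho> * V x)) \<partial>\<pi>) + ennreal cst"
      using phim2 by (simp add: nn_integral_add pi.emeasure_space_1)
    finally have A: "(\<integral>\<^sup>+ x. ennreal (phi (V x)) \<partial>\<pi>) \<le> (\<integral>\<^sup>+ x. ennreal (phi (\<rho> * V x)) \<partial>\<pi>) + ennreal cst" .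
    have B: "(\<integral>\<^sup>+ x. ennreal (phi (V x)) \<partial>\<pi>) = (\<integral>\<^sup>+ x. ennreal (phi (\<rho> * V x)) \<partial>\<pi>) + (\<integral>\<^sup>+ x. ennreal (g n x) \<partial>\<pi>)"
    proof -
      have "(\<integral>\<^sup>+ x. ennreal (phi (V x)) \<partial>\<pi>) = (\<integral>\<^sup>+ x. ennreal (phi (\<rho> * V x)) + ennreal (g n x) \<partial>\<pi>)"
      proof (rule nn_integral_cong)
        fix x
        have "phi (V x) = phi (\<rho> * V x) + g n x"
          unfolding phi_def g_def e_def[symmetric] using phi_diff[of e "V x" \<rho>] e0 r0 V1[of x] by simp
        moreover have "0 \<le> phi (\<rho> * V x)" unfolding phi_def using e0 r0 V1[of x] by simp
        moreover have "0 \<le> g n x" unfolding g_def using r1 V1[of x] r0 by simp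
        ultimately show "ennreal (phi (V x)) = ennreal (phi (\<rho> * V x)) + ennreal (g n x)"
          by (simp add: ennreal_plus)
      qed
      also have "\<dots> = (\<integral>\<^sup>+ x. ennreal (phi (\<rho> * V x)) \<partial>\<pi>) + (\<integral>\<^sup>+ x. ennreal (g n x) \<partial>\<pi>)"
        using phim2 gm by (simp add: nn_integral_add)
      finally show ?thesis .
    qed
    have fin: "(\<integral>\<^sup>+ x. ennreal (phi (\<rho> * V x)) \<partial>\<pi>) \<noteq> \<infinity>"
    proof -
      have "(\<integral>\<^sup>+ x. ennreal (phi (\<rho> * V x)) \<partial>\<pi>) \<le> (\<integral>\<^sup>+ x. ennreal (1 / e) \<partial>\<pi>)"
        unfolding phi_def using e0 r0 V1 by (intro nn_integral_mono ennreal_leI phi_le) (auto intro: mult_nonneg_nonneg order.trans[OF zero_le_one])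
      also have "\<dots> = ennreal (1 / e)" by (simp add: pi.emeasure_space_1)
      finally have "(\<integral>\<^sup>+ x. ennreal (phi (\<rho> * V x)) \<partial>\<pi>) \<le> ennreal (1 / e)" .
      from neq_top_trans[OF ennreal_neq_top this] show ?thesis by simp
    qed
    have "(\<integral>\<^sup>+ x. ennreal (phi (\<rho> * V x)) \<partial>\<pi>) + (\<integral>\<^sup>+ x. ennreal (g n x) \<partial>\<pi>) \<le> (\<integral>\<^sup>+ x. ennreal (phi (\<rho> * V x)) \<partial>\<pi>) + ennreal cst"
      using A unfolding B .
    then show ?thesis using fin unfolding ennreal_add_left_cancel_le by blast
  qed
  have gmn: "(\<lambda>x. ennreal (g n x)) \<in> borel_measurable \<pi>" for n
    unfolding g_def using Vm' by measurable
  have gle: "g m x \<le> g n x" if "m \<le> n" for m n x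
  proof -
    have im: "inverse (real (Suc n)) \<le> inverse (real (Suc m))" using that by (simp add: field_simps)
    have v0: "0 \<le> V x" using V1[of x] by linarith
    have "(1 + inverse (real (Suc n)) * V x) * (1 + inverse (real (Suc n)) * (\<rho> * V x))
        \<le> (1 + inverse (real (Suc m)) * V x) * (1 + inverse (real (Suc m)) * (\<rho> * V x))"
      using im v0 r0 by (intro mult_mono add_left_mono mult_right_mono) auto
    moreover have "0 < (1 + inverse (real (Suc n)) * V x) * (1 + inverse (real (Suc n)) * (\<rho> * V x))"
      using v0 r0 by (intro mult_pos_pos add_pos_nonneg) auto
    moreover have "0 \<le> (1 - \<rho>) * V x" using r1 v0 by simp
    ultimately show ?thesis unfolding g_def by (intro frac_le) auto
  qed
  have inc: "incseq (\<lambda>n x. ennreal (g n x))"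
    by (auto simp: incseq_def le_fun_def intro!: ennreal_leI gle)
  have sup: "(SUP n. ennreal (g n x)) = ennreal ((1 - \<rho>) * V x)" for x
  proof -
    have "(\<lambda>n. g n x) \<longlonglongrightarrow> (1 - \<rho>) * V x / ((1 + 0 * V x) * (1 + 0 * (\<rho> * V x)))"
      unfolding g_def by (intro tendsto_intros LIMSEQ_inverse_real_of_nat) (use r0 V1[of x] in \<open>auto intro: add_pos_nonneg\<close>)
    then have "(\<lambda>n. ennreal (g n x)) \<longlonglongrightarrow> ennreal ((1 - \<rho>) * V x)"
      by (intro tendsto_ennrealI) simp
    moreover have "(\<lambda>n. ennreal (g n x)) \<longlonglongrightarrow> (SUP n. ennreal (g n x))"
      by (rule LIMSEQ_SUP) (auto simp: incseq_def intro!: ennreal_leI gle)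
    ultimately show ?thesis using LIMSEQ_unique by blast
  qed
  have "(\<integral>\<^sup>+ x. ennreal ((1 - \<rho>) * V x) \<partial>\<pi>) = (\<integral>\<^sup>+ x. (SUP n. ennreal (g n x)) \<partial>\<pi>)"
    by (simp add: sup)
  also have "\<dots> = (SUP n. (\<integral>\<^sup>+ x. ennreal (g n x) \<partial>\<pi>))"
    by (rule nn_integral_monotone_convergence_SUP[OF inc gmn])
  also have "\<dots> \<le> ennreal cst" by (rule SUP_least) (rule key)
  finally have L: "(\<integral>\<^sup>+ x. ennreal ((1 - \<rho>) * V x) \<partial>\<pi>) \<le> ennreal cst" .
  have "(\<integral>\<^sup>+ x. ennreal ((1 - \<rho>) * V x) \<partial>\<pi>) = ennreal (1 - \<rho>) * (\<integral>\<^sup>+ x. ennreal (V x) \<partial>\<pi>)"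
  proof -
    have "(\<integral>\<^sup>+ x. ennreal ((1 - \<rho>) * V x) \<partial>\<pi>) = (\<integral>\<^sup>+ x. ennreal (1 - \<rho>) * ennreal (V x) \<partial>\<pi>)"
      using r1 V1 by (intro nn_integral_cong ennreal_mult) (auto intro: order.trans[OF zero_le_one])
    also have "\<dots> = ennreal (1 - \<rho>) * (\<integral>\<^sup>+ x. ennreal (V x) \<partial>\<pi>)"
      using Vm' by (intro nn_integral_cmult) measurable
    finally show ?thesis .
  qed
  with L have L2: "ennreal (1 - \<rho>) * (\<integral>\<^sup>+ x. ennreal (V x) \<partial>\<pi>) \<le> ennreal cst" by simp
  have "(\<integral>\<^sup>+ x. ennreal (V x) \<partial>\<pi>) = ennreal (1 / (1 - \<rho>)) * (ennreal (1 - \<rho>) * (\<integral>\<^sup>+ x. ennreal (V x) \<partial>\<pi>))"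
  proof -
    have "ennreal (1 / (1 - \<rho>)) * ennreal (1 - \<rho>) = 1"
      using r1 by (simp add: ennreal_mult[symmetric])
    then show ?thesis by (simp add: mult.assoc[symmetric])
  qed
  also have "\<dots> \<le> ennreal (1 / (1 - \<rho>)) * ennreal cst"
    by (rule mult_left_mono[OF L2]) simp
  also have "\<dots> = ennreal (cst / (1 - \<rho>))"
    using r1 cst0 by (simp add: ennreal_mult[symmetric])
  finally show ?thesis unfolding V_def cst_def .
qed



theorem lemma3p7:
  fixes \<alpha> \<beta> \<eta> :: real
  assumes "0 < \<alpha>" and "\<alpha> \<le> \<beta>" and "0 < \<eta>" and "\<eta> < \<alpha> / (2 * \<beta>\<^sup>2)"
  shows "\<exists>C>0. \<forall>(d::nat) (M::real) (U::(nat \<Rightarrow> real) \<Rightarrow> real) (\<pi>::(nat \<Rightarrow> real) measure).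
           1 \<le> d \<and> lmc_potential d \<alpha> \<beta> M U \<and> lmc_stationary d \<eta> U \<pi> \<longrightarrow>
           (\<integral>\<^sup>+ x. ennreal ((vnorm d x) ^ 4 + 1) \<partial>\<pi>) \<le> ennreal (C * (real d)\<^sup>2)"
proof -
  define Q where "Q = 1 - 2 * \<eta> * \<alpha> + \<eta>\<^sup>2 * \<beta>\<^sup>2"
  define c where "c = (1 - Q) / 7"
  have Q0: "0 \<le> Q" and c0: "0 < c" and r1: "(1 + c)^3 * Q\<^sup>2 < 1"
    using consts_ok[OF assms] unfolding Q_def c_def by simp_all
  define \<rho> where "\<rho> = (1 + c)^3 * Q\<^sup>2"
  define K where "K = (1 + 1/c)^3 * (2*\<eta>)\<^sup>2"
  have r0: "0 \<le> \<rho>" unfolding \<rho>_def using c0 by simp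
  have r1': "\<rho> < 1" unfolding \<rho>_def by (rule r1)
  have K0: "0 \<le> K" unfolding K_def using c0 by simp
  define C where "C = (3 * K + 1) / (1 - \<rho>)"
  have C0: "0 < C" unfolding C_def using K0 r1' by simp
  show ?thesis
  proof (intro exI[of _ C] conjI allI impI)
    show "0 < C" by (rule C0)
    fix d M U \<pi>
    assume H: "1 \<le> d \<and> lmc_potential d \<alpha> \<beta> M U \<and> lmc_stationary d \<eta> U \<pi>"
    then have d1: "1 \<le> d" and P: "lmc_potential d \<alpha> \<beta> M U" and S: "lmc_stationary d \<eta> U \<pi>" by auto
    have C5: "C5_on_Rd d U" using P unfolding lmc_potential_def by simp
    have PB: "(vnorm d (lmc_step d \<eta> U x \<xi>))^4 + 1
               \<le> \<rho> * ((vnorm d x)^4 + 1) + (K * real d * (\<Sum>i<d. (\<xi> i)^4) + 1)" if x: "x \<in> Rd d" for x \<xi>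
      using step_bound[OF P x assms(1,2,3) c0, of \<xi>] Q0 unfolding \<rho>_def K_def Q_def by simp
    have "(\<integral>\<^sup>+ x. ennreal ((vnorm d x)^4 + 1) \<partial>\<pi>) \<le> ennreal ((K * real d * (3 * real d) + 1) / (1 - \<rho>))"
      by (rule main_d[OF S C5 r0 r1' K0 PB])
    also have "\<dots> \<le> ennreal (C * (real d)\<^sup>2)"
    proof (rule ennreal_leI)
      have dd: "1 \<le> (real d)\<^sup>2" using d1 by simp
      have "K * real d * (3 * real d) + 1 \<le> (3 * K + 1) * (real d)\<^sup>2"
        using dd by (simp add: power2_eq_square algebra_simps)
      then have "(K * real d * (3 * real d) + 1) / (1 - \<rho>) \<le> ((3 * K + 1) * (real d)\<^sup>2) / (1 - \<rho>)"
        using r1' by (intro divide_right_mono) auto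
      also have "\<dots> = C * (real d)\<^sup>2" unfolding C_def by simp
      finally show "(K * real d * (3 * real d) + 1) / (1 - \<rho>) \<le> C * (real d)\<^sup>2" .
    qed
    finally show "(\<integral>\<^sup>+ x. ennreal ((vnorm d x)^4 + 1) \<partial>\<pi>) \<le> ennreal (C * (real d)\<^sup>2)" .
  qed
qed

end
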